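(* Assume the setup described in the context. Then there exists a unique continuous function $f:I\to\mathbb R$ with $f(x_i)=y_i$ for $i=0,\dots,n$ such that for every $i\in N_n$ and every $x\in I_i$, $$f(x)=F_i\big(L_i^{-1}(x),\,f(L_i^{-1}(x))\big).$$ Moreover, setting $A_i=\{(x,f(x)):x\in I_i\}$ for $i\in N_n$, one has $A_i=\bigcup_{j:\,c_{ij}=1}W_i(A_j)$ for every $i\in N_n$ (so $(A_1,\dots,A_n)$ is the invariant set of the recurrent iterated function system with maps $W_1,\dots,W_n$ and connection matrix $C$), and $\bigcup_{i=1}^nA_i$ is the graph of $f$, which interpolates $P$.
   Context: Let $n\ge 2$ and $P=\{(x_i,y_i):i=0,1,\dots,n\}\subset\mathbb R^2$ with $x_0<x_1<\dots<x_n$. Put $I=[x_0,x_n]$, $N_n=\{1,\dots,n\}$ and $I_i=[x_{i-1},x_i]$ for $i\in N_n$. Let $l\ge 2$ and for $k=1,\dots,l$ let $\tilde I_k=[x_{s(k)},x_{e(k)}]$ with $s(k),e(k)\in\{0,\dots,n\}$ and $e(k)-s(k)\ge 2$. Let $\gamma:N_n\to\{1,\dots,l\}$ be a map. For each $i\in N_n$, with $k=\gamma(i)$, let $L_i:\tilde I_k\to I_i$ be a homeomorphism which is a contraction (Lipschitz constant $c_{L_i}<1$) with $L_i(\{x_{s(k)},x_{e(k)}\})=\{x_{i-1},x_i\}$. Let $a:\mathbb R\to\mathbb R$ be Lipschitz with Lipschitz constant $L_a$. For each $i\in N_n$ let $b_i:\tilde I_{\gamma(i)}\to\mathbb R$ be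 Lipschitz, and let $s_i:I_i\to\mathbb R$ be Lipschitz with Lipschitz constant $<1$ and $\sup_{x\in I_i}|s_i(x)|\cdot L_a<1$. Define $F_i:\tilde I_{\gamma(i)}\times\mathbb R\to\mathbb R$ by $F_i(x,y)=s_i(L_i(x))\,a(y)+b_i(x)$, and assume the interpolation condition: for $k=\gamma(i)$, each $\alpha\in\{s(k),e(k)\}$ and the $\beta\in\{i-1,i\}$ with $L_i(x_\alpha)=x_\beta$, one has $F_i(x_\alpha,y_\alpha)=y_\beta$. Define $W_i:\tilde I_{\gamma(i)}\times\mathbb R\to I_i\times\mathbb R$ by $W_i(x,y)=(L_i(x),F_i(x,y))$. The connection matrix $C=(c_{ij})_{i,j=1}^n$ is defined by $c_{ij}=1$ if $I_j\subset\tilde I_{\gamma(i)}$ and $c_{ij}=0$ otherwise. *)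

theory Defs
  imports "HOL-Analysis.Analysis"
begin

definition Fmap :: "(nat \<Rightarrow> real \<Rightarrow> real) \<Rightarrow> (nat \<Rightarrow> real \<Rightarrow> real) \<Rightarrow> (real \<Rightarrow> real)
    \<Rightarrow> (nat \<Rightarrow> real \<Rightarrow> real) \<Rightarrow> nat \<Rightarrow> real \<Rightarrow> real \<Rightarrow> real" where
  "Fmap s L a b i u v = s i (L i u) * a v + b i u"

definition Wmap :: "(nat \<Rightarrow> real \<Rightarrow> real) \<Rightarrow> (nat \<Rightarrow> real \<Rightarrow> real) \<Rightarrow> (real \<Rightarrow> real)
    \<Rightarrow> (nat \<Rightarrow> real \<Rightarrow> real) \<Rightarrow> nat \<Rightarrow> real \<times> real \<Rightarrow> real \<times> real" where
  "Wmap s L a b i p = (L i (fst p), Fmap s L a b i (fst p) (snd p))"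

end

theory Submission
  imports Defs
begin

definition clamp :: "(nat \<Rightarrow> real) \<Rightarrow> nat \<Rightarrow> real \<Rightarrow> real" where
  "clamp x n t = max (x 0) (min (x n) t)"

definition idx :: "(nat \<Rightarrow> real) \<Rightarrow> nat \<Rightarrow> real \<Rightarrow> nat" where
  "idx x n t = (SOME i. i \<in> {1..n} \<and> t \<in> {x (i - 1)..x i})"

definition pw :: "(nat \<Rightarrow> real) \<Rightarrow> nat \<Rightarrow> (nat \<Rightarrow> real \<Rightarrow> real) \<Rightarrow> real \<Rightarrow> real" where
  "pw x n \<Psi> t = \<Psi> (idx x n (clamp x n t)) (clamp x n t)"

context fixes x :: "nat \<Rightarrow> real" and n :: nat
  assumes xm: "\<forall>i<n. x i < x (Suc i)"
begin

lemma xs_strict: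
  assumes "i < j" "j \<le> n"
  shows "(x i :: real) < x j"
  using assms(1,2)
proof (induction j)
  case 0 then show ?case by simp
next
  case (Suc j)
  show ?case
  proof (cases "i = j")
    case True then show ?thesis using xm Suc.prems by auto
  next
    case False then have "x i < x j" using Suc by auto
    also have "x j < x (Suc j)" using xm Suc.prems by auto
    finally show ?thesis .
  qed
qed

lemma xs_mono:
  assumes "i \<le> j" "j \<le> n"
  shows "(x i :: real) \<le> x j"
  using xs_strict assms by (cases "i = j") (auto intro: less_imp_le)

lemma xs_le_iff:
  assumes "i \<le> n" "j \<le> n"
  shows "((x i :: real) \<le> x j) \<longleftrightarrow> i \<le> j"
  using xs_strict[of j i] xs_mono[of i j] assms by force

lemma xs_union:
  assumes "a < b" "b \<le> n"
  shows "(\<Union>j\<in>{Suc a..b}. {x (j - 1)..x j}) = {(x a::real)..x b}"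
  using assms(1,2)
proof (induction b)
  case 0 then show ?case by simp
next
  case (Suc b)
  show ?case
  proof (cases "a = b")
    case True then show ?thesis by simp
  next
    case False
    then have ab: "a < b" using Suc by auto
    have "{Suc a..Suc b} = insert (Suc b) {Suc a..b}" using ab by auto
    then have "(\<Union>j\<in>{Suc a..Suc b}. {x (j - 1)..x j}) = {x b..x (Suc b)} \<union> {x a..x b}"
      using Suc ab by auto
    also have "\<dots> = {x a..x (Suc b)}"
      using xs_mono[of a b] xs_mono[of b "Suc b"] ab Suc.prems by auto
    finally show ?thesis .
  qed
qed

lemma clamp_in:
  shows "clamp x n t \<in> {x 0..x n}"
  using xs_mono[of 0 n] by (auto simp: clamp_def)

lemma clamp_id: "t \<in> {x 0..x n} \<Longrightarrow> clamp x n t = t"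
  by (auto simp: clamp_def)

lemma clamp_cont: "continuous_on UNIV (clamp x n)"
  unfolding clamp_def by (intro continuous_intros)

lemma idx_ex:
  assumes n: "n \<ge> 1" and t: "t \<in> {x 0..x n}"
  shows "idx x n t \<in> {1..n} \<and> t \<in> {x (idx x n t - 1)..x (idx x n t)}"
proof -
  have "t \<in> (\<Union>j\<in>{Suc 0..n}. {x (j - 1)..x j})" using xs_union[of 0 n] n t by auto
  then obtain j where "j \<in> {1..n} \<and> t \<in> {x (j - 1)..x j}" by auto
  then show ?thesis unfolding idx_def by (rule someI)
qed

lemma overlap:
  assumes "i \<in> {1..n}" "j \<in> {1..n}" "i < j" "t \<in> {x (i - 1)..x i}" "t \<in> {x (j - 1)..x j}"
  shows "j = Suc i \<and> t = x i"
proof -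
  have "x (j - 1) \<le> x i" using assms by auto
  then have "j - 1 \<le> i" using xs_le_iff[of "j-1" i] assms by auto
  moreover have "x i \<le> x (j - 1)" using xs_mono[of i "j-1"] assms by auto
  ultimately show ?thesis using assms by auto
qed

lemma pw_eq:
  assumes n: "n \<ge> 1"
    and ends: "\<And>i. i \<in> {1..n} \<Longrightarrow> \<Psi> i (x (i - 1)) = v (i - 1) \<and> \<Psi> i (x i) = v i"
    and i: "i \<in> {1..n}" and t: "t \<in> {x (i - 1)..x i}"
  shows "pw x n \<Psi> t = \<Psi> i t"
proof -
  have t0: "t \<in> {x 0..x n}" using xs_mono[of 0 "i-1"] xs_mono[of i n] i t by (auto, linarith)
  then have ct: "clamp x n t = t" by (rule clamp_id)
  define k where "k = idx x n t"
  have k: "k \<in> {1..n}" "t \<in> {x (k - 1)..x k}" using idx_ex[OF n t0] k_def by auto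
  have "\<Psi> k t = \<Psi> i t"
  proof (cases k i rule: linorder_cases)
    case less
    then have "i = Suc k \<and> t = x k" using overlap[OF k(1) i less k(2) t] by auto
    then show ?thesis using ends[OF k(1)] ends[OF i] by auto
  next
    case equal then show ?thesis by simp
  next
    case greater
    then have "k = Suc i \<and> t = x i" using overlap[OF i k(1) greater t k(2)] by auto
    then show ?thesis using ends[OF k(1)] ends[OF i] by auto
  qed
  then show ?thesis unfolding pw_def ct k_def by simp
qed

lemma pw_clamp: "pw x n \<Psi> (clamp x n t) = pw x n \<Psi> t"
  unfolding pw_def using clamp_id[OF clamp_in] by simp

lemma pw_cont:
  assumes n: "n \<ge> 1"
    and ends: "\<And>i. i \<in> {1..n} \<Longrightarrow> \<Psi> i (x (i - 1)) = v (i - 1) \<and> \<Psi> i (x i) = v i"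
    and cont: "\<And>i. i \<in> {1..n} \<Longrightarrow> continuous_on {x (i - 1)..x i} (\<Psi> i)"
  shows "pw x n \<Psi> \<in> bcontfun"
proof -
  have c1: "continuous_on (\<Union>i\<in>{1..n}. {x (i - 1)..x i}) (pw x n \<Psi>)"
    apply (rule continuous_on_closed_Union)
    subgoal by simp
    subgoal by simp
    subgoal for i using cont[of i] pw_eq[OF n ends, of i] by (auto intro: continuous_on_eq[of _ "\<Psi> i"])
    done
  have U: "(\<Union>i\<in>{1..n}. {x (i - 1)..x i}) = {x 0..x n}"
    using xs_union[of 0 n] n by auto
  have c2: "continuous_on {x 0..x n} (pw x n \<Psi>)" using c1 U by simp
  have "continuous_on UNIV (pw x n \<Psi> \<circ> clamp x n)"
    apply (rule continuous_on_compose[OF clamp_cont])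
    using c2 clamp_in by (auto intro: continuous_on_subset)
  then have c3: "continuous_on UNIV (pw x n \<Psi>)" by (simp add: o_def pw_clamp)
  have "range (pw x n \<Psi>) \<subseteq> pw x n \<Psi> ` {x 0..x n}"
    using clamp_in pw_clamp by (metis image_eqI image_subsetI)
  moreover have "bounded (pw x n \<Psi> ` {x 0..x n})"
    using compact_continuous_image[OF c2] compact_imp_bounded by blast
  ultimately show ?thesis using c3 unfolding bcontfun_def by (auto intro: bounded_subset)
qed

end

theorem theorem1:
  fixes n l :: nat
    and x y :: "nat \<Rightarrow> real"
    and st en :: "nat \<Rightarrow> nat"
    and \<gamma> :: "nat \<Rightarrow> nat"
    and L :: "nat \<Rightarrow> real \<Rightarrow> real"
    and a :: "real \<Rightarrow> real" and La :: real
    and b s :: "nat \<Rightarrow> real \<Rightarrow> real"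
  assumes n2: "n \<ge> 2"
    and x_mono: "\<And>i. i < n \<Longrightarrow> x i < x (Suc i)"
    and l2: "l \<ge> 2"
    and se: "\<And>k. k \<in> {1..l} \<Longrightarrow> en k \<le> n \<and> st k + 2 \<le> en k"
    and gam: "\<And>i. i \<in> {1..n} \<Longrightarrow> \<gamma> i \<in> {1..l}"
    and L_homeo: "\<And>i. i \<in> {1..n} \<Longrightarrow>
        \<exists>g. homeomorphism {x (st (\<gamma> i))..x (en (\<gamma> i))} {x (i - 1)..x i} (L i) g"
    and L_contr: "\<And>i. i \<in> {1..n} \<Longrightarrow>
        \<exists>c<1. c-lipschitz_on {x (st (\<gamma> i))..x (en (\<gamma> i))} (L i)"
    and L_end: "\<And>i. i \<in> {1..n} \<Longrightarrow>
        L i ` {x (st (\<gamma> i)), x (en (\<gamma> i))} = {x (i - 1), x i}"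
    and a_lip: "La-lipschitz_on UNIV a"
    and b_lip: "\<And>i. i \<in> {1..n} \<Longrightarrow>
        \<exists>C. C-lipschitz_on {x (st (\<gamma> i))..x (en (\<gamma> i))} (b i)"
    and s_lip: "\<And>i. i \<in> {1..n} \<Longrightarrow> \<exists>c<1. c-lipschitz_on {x (i - 1)..x i} (s i)"
    and s_sup: "\<And>i. i \<in> {1..n} \<Longrightarrow> (SUP t\<in>{x (i - 1)..x i}. \<bar>s i t\<bar>) * La < 1"
    and interp: "\<And>i \<alpha> \<beta>. i \<in> {1..n} \<Longrightarrow> \<alpha> \<in> {st (\<gamma> i), en (\<gamma> i)} \<Longrightarrow>
        \<beta> \<in> {i - 1, i} \<Longrightarrow> L i (x \<alpha>) = x \<beta> \<Longrightarrow> Fmap s L a b i (x \<alpha>) (y \<alpha>) = y \<beta>"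
  shows "\<exists>f. (continuous_on {x 0..x n} f
            \<and> (\<forall>i\<in>{0..n}. f (x i) = y i)
            \<and> (\<forall>i\<in>{1..n}. \<forall>t\<in>{x (i - 1)..x i}.
                 f t = Fmap s L a b i (inv_into {x (st (\<gamma> i))..x (en (\<gamma> i))} (L i) t)
                         (f (inv_into {x (st (\<gamma> i))..x (en (\<gamma> i))} (L i) t))))
         \<and> (\<forall>g. (continuous_on {x 0..x n} g
                  \<and> (\<forall>i\<in>{0..n}. g (x i) = y i)
                  \<and> (\<forall>i\<in>{1..n}. \<forall>t\<in>{x (i - 1)..x i}.
                       g t = Fmap s L a b i (inv_into {x (st (\<gamma> i))..x (en (\<gamma> i))} (L i) t)
                               (g (inv_into {x (st (\<gamma> i))..x (en (\<gamma> i))} (L i) t))))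
                \<longrightarrow> (\<forall>t\<in>{x 0..x n}. g t = f t))
         \<and> (\<forall>i\<in>{1..n}. (\<lambda>t. (t, f t)) ` {x (i - 1)..x i} =
              (\<Union>j\<in>{j\<in>{1..n}. {x (j - 1)..x j} \<subseteq> {x (st (\<gamma> i))..x (en (\<gamma> i))}}.
                 Wmap s L a b i ` ((\<lambda>t. (t, f t)) ` {x (j - 1)..x j})))
         \<and> (\<Union>i\<in>{1..n}. (\<lambda>t. (t, f t)) ` {x (i - 1)..x i}) = (\<lambda>t. (t, f t)) ` {x 0..x n}"
proof -
  have xm: "\<forall>i<n. x i < x (Suc i)" using x_mono by blast
  note mono = xs_mono[where x=x and n=n, OF xm]
  note strict = xs_strict[where x=x and n=n, OF xm]
  have n1: "n \<ge> 1" using n2 by simp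
  define J where "J i = {x (st (\<gamma> i))..x (en (\<gamma> i))}" for i
  define Li where "Li i = inv_into (J i) (L i)" for i
  define I where "I i = {x (i - 1)..x i}" for i
  have "\<forall>i\<in>{1..n}. \<exists>g. homeomorphism (J i) (I i) (L i) g" using L_homeo unfolding J_def I_def by blast
  then obtain h where h: "\<And>i. i\<in>{1..n} \<Longrightarrow> homeomorphism (J i) (I i) (L i) (h i)" by metis
  have LJ: "\<And>i. i\<in>{1..n} \<Longrightarrow> L i ` J i = I i" using h by (simp add: homeomorphism_def)
  have inj: "\<And>i. i\<in>{1..n} \<Longrightarrow> inj_on (L i) (J i)" using h unfolding homeomorphism_def
    by (metis inj_on_inverseI)
  have Li_h: "\<And>i t. i\<in>{1..n} \<Longrightarrow> t \<in> I i \<Longrightarrow> Li i t = h i t"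
    unfolding Li_def using h inj unfolding homeomorphism_def
    by (metis image_eqI inv_into_f_eq)
  have Li_in: "\<And>i t. i\<in>{1..n} \<Longrightarrow> t \<in> I i \<Longrightarrow> Li i t \<in> J i"
    unfolding Li_def using LJ by (metis inv_into_into)
  have L_Li: "\<And>i t. i\<in>{1..n} \<Longrightarrow> t \<in> I i \<Longrightarrow> L i (Li i t) = t"
    unfolding Li_def using LJ by (metis f_inv_into_f)
  have Li_L: "\<And>i u. i\<in>{1..n} \<Longrightarrow> u \<in> J i \<Longrightarrow> Li i (L i u) = u"
    unfolding Li_def using inj by (metis inv_into_f_f)
  have hc: "\<And>i. i\<in>{1..n} \<Longrightarrow> continuous_on (I i) (h i)" using h by (simp add: homeomorphism_def)
  have sten: "\<And>i. i\<in>{1..n} \<Longrightarrow> st (\<gamma> i) < en (\<gamma> i) \<and> en (\<gamma> i) \<le> n" using se gam by force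
  have J_sub: "\<And>i. i\<in>{1..n} \<Longrightarrow> J i \<subseteq> {x 0..x n}"
  proof -
    fix i assume i: "i\<in>{1..n}"
    have "x 0 \<le> x (st (\<gamma> i))" using mono[of 0 "st (\<gamma> i)"] sten[OF i] by simp
    moreover have "x (en (\<gamma> i)) \<le> x n" using mono[of "en (\<gamma> i)" n] sten[OF i] by simp
    ultimately show "J i \<subseteq> {x 0..x n}" unfolding J_def by auto
  qed
  have I_sub: "\<And>i. i\<in>{1..n} \<Longrightarrow> I i \<subseteq> {x 0..x n}"
  proof -
    fix i assume i: "i\<in>{1..n}"
    then show "I i \<subseteq> {x 0..x n}" unfolding I_def using mono[of 0 "i - 1"] mono[of i n] by auto
  qed
  define ip where "ip g \<longleftrightarrow> (\<forall>j\<le>n. g (x j) = y j)" for g :: "real \<Rightarrow> real"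
  define \<Psi> where "\<Psi> g i t = Fmap s L a b i (Li i t) (g (Li i t))" for g :: "real \<Rightarrow> real" and i t
  have ends_gen: "\<Psi> g i (x \<beta>) = y \<beta>" if ipg: "ip g" and i: "i\<in>{1..n}" and \<beta>: "\<beta> \<in> {i - 1, i}" for g i \<beta>
  proof -
    have "x \<beta> \<in> {x (i - 1), x i}" using \<beta> by blast
    then have "x \<beta> \<in> L i ` {x (st (\<gamma> i)), x (en (\<gamma> i))}" by (simp only: L_end[OF i])
    then obtain u where u: "u \<in> {x (st (\<gamma> i)), x (en (\<gamma> i))}" "x \<beta> = L i u" by (rule imageE)
    have "\<exists>\<alpha>. \<alpha> \<in> {st (\<gamma> i), en (\<gamma> i)} \<and> L i (x \<alpha>) = x \<beta>"
    proof (cases "u = x (st (\<gamma> i))")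
      case True then show ?thesis using u by (intro exI[of _ "st (\<gamma> i)"]) simp
    next
      case False then have "u = x (en (\<gamma> i))" using u(1) by simp
      then show ?thesis using u by (intro exI[of _ "en (\<gamma> i)"]) simp
    qed
    then obtain \<alpha> where \<alpha>: "\<alpha> \<in> {st (\<gamma> i), en (\<gamma> i)}" "L i (x \<alpha>) = x \<beta>" by (elim exE conjE)
    have "x (st (\<gamma> i)) \<le> x (en (\<gamma> i))" using mono[of "st (\<gamma> i)" "en (\<gamma> i)"] sten[OF i] by simp
    then have x\<alpha>: "x \<alpha> \<in> J i" using \<alpha>(1) unfolding J_def by (cases "\<alpha> = st (\<gamma> i)") auto
    have "\<alpha> \<le> n" using \<alpha>(1) sten[OF i] by (cases "\<alpha> = st (\<gamma> i)") auto
    then have g\<alpha>: "g (x \<alpha>) = y \<alpha>" using ipg unfolding ip_def by blast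
    have "Li i (x \<beta>) = x \<alpha>" using Li_L[OF i x\<alpha>] \<alpha>(2) by simp
    then show ?thesis unfolding \<Psi>_def using interp[OF i \<alpha>(1) \<beta> \<alpha>(2)] g\<alpha> by simp
  qed
  have ends: "\<Psi> g i (x (i - 1)) = y (i - 1) \<and> \<Psi> g i (x i) = y i" if "ip g" "i\<in>{1..n}" for g i
    using ends_gen[OF that, of "i - 1"] ends_gen[OF that, of i] by simp
  have contPsi: "continuous_on (I i) (\<Psi> g i)" if cg: "continuous_on {x 0..x n} g" and i: "i\<in>{1..n}" for g i
  proof -
    obtain cs where "cs-lipschitz_on (I i) (s i)" using s_lip[OF i] unfolding I_def by blast
    then have c_s: "continuous_on (I i) (s i)" by (rule lipschitz_on_continuous_on)
    obtain cb where "cb-lipschitz_on (J i) (b i)" using b_lip[OF i] unfolding J_def by blast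
    then have c_b: "continuous_on (J i) (b i)" by (rule lipschitz_on_continuous_on)
    have c_a: "continuous_on UNIV a" using a_lip by (rule lipschitz_on_continuous_on)
    have hJ: "h i ` I i \<subseteq> J i" using Li_h[OF i] Li_in[OF i] by auto
    have c1: "continuous_on (I i) (\<lambda>t. b i (h i t))"
      by (rule continuous_on_compose2[OF c_b hc[OF i] hJ])
    have c2: "continuous_on (I i) (\<lambda>t. g (h i t))"
      by (rule continuous_on_compose2[OF cg hc[OF i]]) (use hJ J_sub[OF i] in auto)
    have c3: "continuous_on (I i) (\<lambda>t. a (g (h i t)))"
      by (rule continuous_on_compose2[OF c_a c2]) auto
    have c4: "continuous_on (I i) (\<lambda>t. s i t * a (g (h i t)) + b i (h i t))"
      by (intro continuous_on_add continuous_on_mult c_s c3 c1)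
    show ?thesis
    proof (rule continuous_on_eq[OF c4])
      fix t assume t: "t \<in> I i"
      have "L i (h i t) = t" using L_Li[OF i t] Li_h[OF i t] by simp
      then show "s i t * a (g (h i t)) + b i (h i t) = \<Psi> g i t"
        unfolding \<Psi>_def Fmap_def Li_h[OF i t] by simp
    qed
  qed
  have cs_all: "continuous_on (I i) (s i)" if i: "i\<in>{1..n}" for i
  proof -
    obtain cs where "cs-lipschitz_on (I i) (s i)" using s_lip[OF i] unfolding I_def by blast
    then show ?thesis by (rule lipschitz_on_continuous_on)
  qed
  have ip_eq: "ip g \<longleftrightarrow> (\<forall>j\<le>n. g (x j) = y j)" for g unfolding ip_def by simp
  have xj_in: "\<exists>i\<in>{1..n}. j \<in> {i - 1, i} \<and> x j \<in> I i" if j: "j \<le> n" for j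
  proof (cases "j = 0")
    case True
    then show ?thesis using n1 mono[of 0 1] unfolding I_def by (intro bexI[of _ 1]) auto
  next
    case False
    then show ?thesis using j mono[of "j - 1" j] unfolding I_def by (intro bexI[of _ j]) auto
  qed
  note pw_eq' = pw_eq[where x=x and n=n, OF xm n1]
  note pw_cont' = pw_cont[where x=x and n=n, OF xm n1]
  note pw_clamp' = pw_clamp[where x=x and n=n, OF xm]
  note clamp_in' = clamp_in[where x=x and n=n, OF xm]
  note idx_ex' = idx_ex[where x=x and n=n, OF xm n1]
  have pwI: "pw x n (\<Psi> g) t = \<Psi> g i t" if "ip g" "i\<in>{1..n}" "t \<in> I i" for g i t
    using pw_eq'[of "\<Psi> g" y i t] ends[OF that(1)] that unfolding I_def by blast
  have pw_in: "pw x n (\<Psi> g) \<in> bcontfun" if "ip g" "continuous_on {x 0..x n} g" for g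
    using pw_cont'[of "\<Psi> g" y] ends[OF that(1)] contPsi[OF that(2)] unfolding I_def by blast
  have clampI: "\<exists>i\<in>{1..n}. clamp x n t \<in> I i" for t
    using idx_ex'[OF clamp_in'[of t]] unfolding I_def by blast
  define S where "S = {G :: real \<Rightarrow>\<^sub>C real. (\<forall>t. apply_bcontfun G t = apply_bcontfun G (clamp x n t)) \<and> ip (apply_bcontfun G)}"
  define T where "T G = Bcontfun (pw x n (\<Psi> (apply_bcontfun G)))" for G :: "real \<Rightarrow>\<^sub>C real"
  have TG: "apply_bcontfun (T G) = pw x n (\<Psi> (apply_bcontfun G))" if "G \<in> S" for G
    unfolding T_def using that pw_in[of "apply_bcontfun G"] unfolding S_def
    by (simp add: Bcontfun_inverse)
  have TS: "T ` S \<subseteq> S"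
  proof
    fix H assume "H \<in> T ` S"
    then obtain G where G: "G \<in> S" "H = T G" by blast
    have ipG: "ip (apply_bcontfun G)" using G unfolding S_def by simp
    have "ip (apply_bcontfun H)" unfolding ip_eq
    proof (intro allI impI)
      fix j assume j: "j \<le> n"
      obtain i where i: "i\<in>{1..n}" "j \<in> {i - 1, i}" "x j \<in> I i" using xj_in[OF j] by blast
      show "apply_bcontfun H (x j) = y j"
        using G(2) TG[OF G(1)] pwI[OF ipG i(1) i(3)] ends_gen[OF ipG i(1) i(2)] by simp
    qed
    moreover have "\<forall>t. apply_bcontfun H t = apply_bcontfun H (clamp x n t)"
      using G(2) TG[OF G(1)] pw_clamp' by simp
    ultimately show "H \<in> S" unfolding S_def by simp
  qed
  define M where "M i = (SUP t\<in>I i. \<bar>s i t\<bar>)" for i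
  have sM: "\<bar>s i t\<bar> \<le> M i" if i: "i\<in>{1..n}" and t: "t \<in> I i" for i t
  proof -
    have "continuous_on (I i) (\<lambda>t. \<bar>s i t\<bar>)" using cs_all[OF i] by (intro continuous_intros)
    then have "compact ((\<lambda>t. \<bar>s i t\<bar>) ` I i)" unfolding I_def by (intro compact_continuous_image) auto
    then have "bdd_above ((\<lambda>t. \<bar>s i t\<bar>) ` I i)" by (intro bounded_imp_bdd_above compact_imp_bounded)
    then show ?thesis unfolding M_def using t by (rule cSUP_upper2) simp
  qed
  have La0: "0 \<le> La" using a_lip by (rule lipschitz_on_nonneg)
  define K where "K = Max ((\<lambda>i. M i * La) ` {1..n})"
  have K_ge: "M i * La \<le> K" if "i\<in>{1..n}" for i unfolding K_def using that by (intro Max_ge) auto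
  have K1: "K < 1"
  proof -
    have "K \<in> (\<lambda>i. M i * La) ` {1..n}" unfolding K_def using n1 by (intro Max_in) auto
    then obtain i where "i\<in>{1..n}" "K = M i * La" by blast
    then show ?thesis using s_sup unfolding M_def I_def by simp
  qed
  have K0: "0 \<le> K"
  proof -
    have "0 \<le> M 1" using sM[of 1 "x 1"] n1 mono[of 0 1] unfolding I_def by (auto intro: order_trans[OF abs_ge_zero])
    then show ?thesis using K_ge[of 1] n1 La0 by (meson atLeastAtMost_iff mult_nonneg_nonneg order_trans order_refl)
  qed
  have contr: "dist (T G) (T H) \<le> K * dist G H" if G: "G \<in> S" and H: "H \<in> S" for G H
  proof (rule dist_bound)
    fix t
    obtain i where i: "i\<in>{1..n}" "clamp x n t \<in> I i" using clampI by blast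
    define c where "c = clamp x n t"
    define u where "u = Li i c"
    have ipG: "ip (apply_bcontfun G)" and ipH: "ip (apply_bcontfun H)" using G H unfolding S_def by auto
    have TGt: "apply_bcontfun (T G) t = \<Psi> (apply_bcontfun G) i c"
      using TG[OF G] pw_clamp'[of _ t] pwI[OF ipG i] unfolding c_def by metis
    have THt: "apply_bcontfun (T H) t = \<Psi> (apply_bcontfun H) i c"
      using TG[OF H] pw_clamp'[of _ t] pwI[OF ipH i] unfolding c_def by metis
    have Lu: "L i u = c" unfolding u_def c_def using L_Li[OF i] by simp
    have diff: "\<Psi> (apply_bcontfun G) i c - \<Psi> (apply_bcontfun H) i c
        = s i c * (a (apply_bcontfun G u) - a (apply_bcontfun H u))"
      unfolding \<Psi>_def Fmap_def u_def[symmetric] Lu by (simp add: algebra_simps)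
    have "\<bar>a (apply_bcontfun G u) - a (apply_bcontfun H u)\<bar> \<le> La * dist (apply_bcontfun G u) (apply_bcontfun H u)"
      using lipschitz_onD[OF a_lip] by (simp add: dist_real_def)
    also have "\<dots> \<le> La * dist G H" using dist_bounded La0 by (intro mult_left_mono) auto
    finally have da: "\<bar>a (apply_bcontfun G u) - a (apply_bcontfun H u)\<bar> \<le> La * dist G H" .
    have "dist (apply_bcontfun (T G) t) (apply_bcontfun (T H) t) = \<bar>s i c\<bar> * \<bar>a (apply_bcontfun G u) - a (apply_bcontfun H u)\<bar>"
      unfolding TGt THt dist_real_def diff abs_mult ..
    also have "\<dots> \<le> M i * (La * dist G H)"
      using sM[OF i(1)] i(2) da unfolding c_def by (intro mult_mono) (auto intro: order_trans[OF abs_ge_zero])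
    also have "\<dots> = (M i * La) * dist G H" by simp
    also have "\<dots> \<le> K * dist G H" using K_ge[OF i(1)] by (intro mult_right_mono) auto
    finally show "dist (apply_bcontfun (T G) t) (apply_bcontfun (T H) t) \<le> K * dist G H" .
  qed
  have ev: "continuous_on UNIV (\<lambda>G::real \<Rightarrow>\<^sub>C real. apply_bcontfun G t)" for t
  proof -
    have "1-lipschitz_on UNIV (\<lambda>G::real \<Rightarrow>\<^sub>C real. apply_bcontfun G t)"
      unfolding lipschitz_on_def using dist_bounded by auto
    then show ?thesis by (rule lipschitz_on_continuous_on)
  qed
  have S_eq: "S = (\<Inter>t. {G. apply_bcontfun G t = apply_bcontfun G (clamp x n t)}) \<inter> (\<Inter>j\<in>{..n}. {G. apply_bcontfun G (x j) = y j})"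
    unfolding S_def ip_def by auto
  have clS: "closed S" unfolding S_eq
    by (intro closed_Int closed_INT ballI closed_Collect_eq ev continuous_on_const)
  define lin where "lin i t = y (i - 1) + (y i - y (i - 1)) * (t - x (i - 1)) / (x i - x (i - 1))" for i t
  have lin_ends: "lin i (x (i - 1)) = y (i - 1) \<and> lin i (x i) = y i" if i: "i\<in>{1..n}" for i
  proof -
    have "x (i - 1) < x i" using strict[of "i - 1" i] i by auto
    then show ?thesis unfolding lin_def by simp
  qed
  have lin_cont: "continuous_on {x (i - 1)..x i} (lin i)" if i: "i\<in>{1..n}" for i
  proof -
    have "x (i - 1) < x i" using strict[of "i - 1" i] i by auto
    then show ?thesis unfolding lin_def by (intro continuous_intros) auto
  qed
  have lin_in: "pw x n lin \<in> bcontfun" using pw_cont'[of lin y] lin_ends lin_cont by blast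
  define G0 where "G0 = Bcontfun (pw x n lin)"
  have G0: "apply_bcontfun G0 = pw x n lin" unfolding G0_def using lin_in by (simp add: Bcontfun_inverse)
  have "G0 \<in> S" unfolding S_def ip_eq
  proof (intro CollectI conjI allI impI)
    fix t show "apply_bcontfun G0 t = apply_bcontfun G0 (clamp x n t)" using G0 pw_clamp' by simp
  next
    fix j assume j: "j \<le> n"
    obtain i where i: "i\<in>{1..n}" "j \<in> {i - 1, i}" "x j \<in> I i" using xj_in[OF j] by blast
    have "pw x n lin (x j) = lin i (x j)" using pw_eq'[of lin y i "x j"] lin_ends i unfolding I_def by blast
    then show "apply_bcontfun G0 (x j) = y j" using G0 lin_ends[OF i(1)] i(2) by auto
  qed
  then have Sne: "S \<noteq> {}" by blast
  have "\<exists>!G\<in>S. T G = G"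
    by (rule Banach_fix[OF _ Sne K0 K1 TS contr]) (simp add: complete_eq_closed clS)
  then obtain f0 where f0: "f0 \<in> S" "T f0 = f0" and f0u: "\<And>G. G \<in> S \<Longrightarrow> T G = G \<Longrightarrow> G = f0"
    by metis
  define f where "f = apply_bcontfun f0"
  have ipf: "ip f" using f0 unfolding S_def f_def by simp
  have f_fix: "f t = \<Psi> f i t" if "i\<in>{1..n}" "t \<in> I i" for i t
  proof -
    have "f t = apply_bcontfun (T f0) t" using f0(2) unfolding f_def by simp
    also have "\<dots> = pw x n (\<Psi> f) t" using TG[OF f0(1)] unfolding f_def by simp
    also have "\<dots> = \<Psi> f i t" using pwI[OF ipf that] .
    finally show ?thesis .
  qed
  note clamp_id' = clamp_id[where x=x and n=n, OF xm]
  have E1: "continuous_on {x 0..x n} f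
            \<and> (\<forall>i\<in>{0..n}. f (x i) = y i)
            \<and> (\<forall>i\<in>{1..n}. \<forall>t\<in>{x (i - 1)..x i}.
                 f t = Fmap s L a b i (inv_into {x (st (\<gamma> i))..x (en (\<gamma> i))} (L i) t)
                         (f (inv_into {x (st (\<gamma> i))..x (en (\<gamma> i))} (L i) t)))"
  proof (intro conjI)
    show "continuous_on {x 0..x n} f" unfolding f_def by simp
    show "\<forall>i\<in>{0..n}. f (x i) = y i" using ipf unfolding ip_def by auto
    show "\<forall>i\<in>{1..n}. \<forall>t\<in>{x (i - 1)..x i}.
                 f t = Fmap s L a b i (inv_into {x (st (\<gamma> i))..x (en (\<gamma> i))} (L i) t)
                         (f (inv_into {x (st (\<gamma> i))..x (en (\<gamma> i))} (L i) t))"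
      using f_fix unfolding \<Psi>_def Li_def J_def I_def by blast
  qed
  have E2: "\<forall>g. (continuous_on {x 0..x n} g
                  \<and> (\<forall>i\<in>{0..n}. g (x i) = y i)
                  \<and> (\<forall>i\<in>{1..n}. \<forall>t\<in>{x (i - 1)..x i}.
                       g t = Fmap s L a b i (inv_into {x (st (\<gamma> i))..x (en (\<gamma> i))} (L i) t)
                               (g (inv_into {x (st (\<gamma> i))..x (en (\<gamma> i))} (L i) t))))
                \<longrightarrow> (\<forall>t\<in>{x 0..x n}. g t = f t)"
  proof (intro allI impI)
    fix g assume g: "continuous_on {x 0..x n} g
                  \<and> (\<forall>i\<in>{0..n}. g (x i) = y i)
                  \<and> (\<forall>i\<in>{1..n}. \<forall>t\<in>{x (i - 1)..x i}.
                       g t = Fmap s L a b i (inv_into {x (st (\<gamma> i))..x (en (\<gamma> i))} (L i) t)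
                               (g (inv_into {x (st (\<gamma> i))..x (en (\<gamma> i))} (L i) t)))"
    have gc: "continuous_on {x 0..x n} g" using g by blast
    have gip: "ip g" using g unfolding ip_def by auto
    have gfix: "g t = \<Psi> g i t" if "i\<in>{1..n}" "t \<in> I i" for i t
      using g that unfolding \<Psi>_def Li_def J_def I_def by blast
    define Gf where "Gf = g \<circ> clamp x n"
    have cl_sub: "clamp x n ` UNIV \<subseteq> {x 0..x n}" using clamp_in' by auto
    have ccl: "continuous_on UNIV (clamp x n)" unfolding clamp_def by (intro continuous_intros)
    have "continuous_on UNIV Gf" unfolding Gf_def
      by (rule continuous_on_compose[OF ccl continuous_on_subset[OF gc cl_sub]])
    moreover have "bounded (range Gf)"
    proof -
      have "range Gf \<subseteq> g ` {x 0..x n}" unfolding Gf_def using cl_sub by auto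
      moreover have "bounded (g ` {x 0..x n})"
        using compact_continuous_image[OF gc] compact_imp_bounded by blast
      ultimately show ?thesis by (rule bounded_subset[rotated])
    qed
    ultimately have Gf_in: "Gf \<in> bcontfun" unfolding bcontfun_def by simp
    define G where "G = Bcontfun Gf"
    have Gapp: "apply_bcontfun G = Gf" unfolding G_def using Gf_in by (simp add: Bcontfun_inverse)
    have Gg: "apply_bcontfun G t = g t" if "t \<in> {x 0..x n}" for t
      using Gapp clamp_id'[OF that] unfolding Gf_def by simp
    have GS: "G \<in> S" unfolding S_def ip_eq
    proof (intro CollectI conjI allI impI)
      fix t show "apply_bcontfun G t = apply_bcontfun G (clamp x n t)"
        using Gapp clamp_id'[OF clamp_in'[of t]] unfolding Gf_def by simp
    next
      fix j assume j: "j \<le> n"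
      have "x j \<in> {x 0..x n}" using mono[of 0 j] mono[of j n] j by auto
      then show "apply_bcontfun G (x j) = y j" using Gg gip j unfolding ip_def by auto
    qed
    have "T G = G"
    proof (rule bcontfun_eqI)
      fix t
      obtain i where i: "i\<in>{1..n}" "clamp x n t \<in> I i" using clampI by blast
      define c where "c = clamp x n t"
      have ipG: "ip (apply_bcontfun G)" using GS unfolding S_def by simp
      have "apply_bcontfun (T G) t = \<Psi> (apply_bcontfun G) i c"
        using TG[OF GS] pw_clamp'[of _ t] pwI[OF ipG i] unfolding c_def by metis
      also have "\<dots> = \<Psi> g i c"
      proof -
        have "Li i c \<in> {x 0..x n}" using Li_in[OF i(1)] i(2) J_sub[OF i(1)] unfolding c_def by blast
        then show ?thesis unfolding \<Psi>_def using Gg by simp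
      qed
      also have "\<dots> = g c" using gfix[OF i(1)] i(2) unfolding c_def by simp
      also have "\<dots> = apply_bcontfun G t" using Gapp unfolding Gf_def c_def by simp
      finally show "apply_bcontfun (T G) t = apply_bcontfun G t" .
    qed
    then have "G = f0" using f0u GS by blast
    then show "\<forall>t\<in>{x 0..x n}. g t = f t" using Gg unfolding f_def by auto
  qed
  note xs_union' = xs_union[where x=x and n=n, OF xm]
  have E3: "\<forall>i\<in>{1..n}. (\<lambda>t. (t, f t)) ` {x (i - 1)..x i} =
              (\<Union>j\<in>{j\<in>{1..n}. {x (j - 1)..x j} \<subseteq> {x (st (\<gamma> i))..x (en (\<gamma> i))}}.
                 Wmap s L a b i ` ((\<lambda>t. (t, f t)) ` {x (j - 1)..x j}))"
  proof
    fix i assume i: "i \<in> {1..n}"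
    define Js where "Js = {j\<in>{1..n}. {x (j - 1)..x j} \<subseteq> {x (st (\<gamma> i))..x (en (\<gamma> i))}}"
    have UJ: "(\<Union>j\<in>Js. {x (j - 1)..x j}) = J i"
    proof
      show "(\<Union>j\<in>Js. {x (j - 1)..x j}) \<subseteq> J i" unfolding Js_def J_def by auto
    next
      have "J i = (\<Union>j\<in>{Suc (st (\<gamma> i))..en (\<gamma> i)}. {x (j - 1)..x j})"
        unfolding J_def using xs_union'[of "st (\<gamma> i)" "en (\<gamma> i)"] sten[OF i] by simp
      moreover have "{Suc (st (\<gamma> i))..en (\<gamma> i)} \<subseteq> Js"
      proof
        fix j assume j: "j \<in> {Suc (st (\<gamma> i))..en (\<gamma> i)}"
        have "x (st (\<gamma> i)) \<le> x (j - 1)" using mono[of "st (\<gamma> i)" "j - 1"] j sten[OF i] by auto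
        moreover have "x j \<le> x (en (\<gamma> i))" using mono[of j "en (\<gamma> i)"] j sten[OF i] by auto
        ultimately show "j \<in> Js" unfolding Js_def using j sten[OF i] by auto
      qed
      ultimately show "J i \<subseteq> (\<Union>j\<in>Js. {x (j - 1)..x j})" by blast
    qed
    have W: "Wmap s L a b i (u, f u) = (L i u, f (L i u))" if u: "u \<in> J i" for u
    proof -
      have "L i u \<in> I i" using LJ[OF i] u by blast
      then have "f (L i u) = \<Psi> f i (L i u)" by (rule f_fix[OF i])
      also have "\<dots> = Fmap s L a b i u (f u)" unfolding \<Psi>_def Li_L[OF i u] ..
      finally show ?thesis unfolding Wmap_def by simp
    qed
    have "(\<Union>j\<in>Js. Wmap s L a b i ` ((\<lambda>t. (t, f t)) ` {x (j - 1)..x j}))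
        = Wmap s L a b i ` ((\<lambda>t. (t, f t)) ` (\<Union>j\<in>Js. {x (j - 1)..x j}))" by blast
    also have "\<dots> = Wmap s L a b i ` ((\<lambda>t. (t, f t)) ` J i)" unfolding UJ ..
    also have "\<dots> = (\<lambda>u. (L i u, f (L i u))) ` J i"
      unfolding image_image using W by (intro image_cong) auto
    also have "\<dots> = (\<lambda>t. (t, f t)) ` (L i ` J i)" unfolding image_image ..
    also have "\<dots> = (\<lambda>t. (t, f t)) ` {x (i - 1)..x i}" unfolding LJ[OF i] I_def ..
    finally show "(\<lambda>t. (t, f t)) ` {x (i - 1)..x i} =
              (\<Union>j\<in>{j\<in>{1..n}. {x (j - 1)..x j} \<subseteq> {x (st (\<gamma> i))..x (en (\<gamma> i))}}.
                 Wmap s L a b i ` ((\<lambda>t. (t, f t)) ` {x (j - 1)..x j}))" unfolding Js_def by simp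
  qed
  have E4: "(\<Union>i\<in>{1..n}. (\<lambda>t. (t, f t)) ` {x (i - 1)..x i}) = (\<lambda>t. (t, f t)) ` {x 0..x n}"
  proof -
    have "(\<Union>i\<in>{1..n}. (\<lambda>t. (t, f t)) ` {x (i - 1)..x i}) = (\<lambda>t. (t, f t)) ` (\<Union>i\<in>{1..n}. {x (i - 1)..x i})"
      by blast
    also have "(\<Union>i\<in>{1..n}. {x (i - 1)..x i}) = {x 0..x n}" using xs_union'[of 0 n] n1 by simp
    finally show ?thesis .
  qed
  show ?thesis
    apply (rule exI[of _ f])
    apply (rule conjI, rule E1)
    apply (rule conjI, rule E2)
    apply (rule conjI, rule E3)
    by (rule E4)
qed
end
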